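(* Let $X$ be a compact Hausdorff space and let $\rho\colon X\times X\to[0,\infty]$ be a function continuous with respect to the upper topology on $[0,\infty]$ such that for all $x,y\in X$, $$\rho(x,y)=\inf_{z\in X}\big(\rho(x,z)+\rho(z,y)\big).$$ Let $A=\{x\in X\mid\rho(x,x)=0\}$. Then for all $x,y\in X$, $$\rho(x,y)=\inf_{a\in A}\big(\rho(x,a)+\rho(a,y)\big).$$
   Context: The upper topology on $[0,\infty]$ is the topology whose nonempty proper open sets are the sets $]u,\infty]$ for $u\in[0,\infty]$; continuity into it means lower semicontinuity. The infimum of the empty set is $\infty$. *)

theory Defs
  imports "HOL-Analysis.Analysis"
begin

text \<open>The upper topology on [0,\<infinity>] (type ennreal): open sets are the empty set,
  the whole space, and the sets ]u,\<infinity>] for u in [0,\<infinity>].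
  Note that the empty set is ]\<infinity>,\<infinity>].\<close>

definition upper_open :: "ennreal set \<Rightarrow> bool" where
  "upper_open S \<longleftrightarrow> S = UNIV \<or> (\<exists>u. S = {u<..})"

lemma istopology_upper_open: "istopology upper_open"
  unfolding istopology_def
proof (intro conjI allI impI)
  fix S T assume "upper_open S" "upper_open T"
  then show "upper_open (S \<inter> T)"
    unfolding upper_open_def
  proof (elim disjE exE)
    fix u v assume "S = {u<..}" "T = {v<..}"
    then have "S \<inter> T = {max u v<..}" by auto
    then show "S \<inter> T = UNIV \<or> (\<exists>u. S \<inter> T = {u<..})" by blast
  qed auto
next
  fix K assume K: "\<forall>S\<in>K. upper_open S"
  show "upper_open (\<Union>K)"
  proof (cases "UNIV \<in> K")
    case True then show ?thesis unfolding upper_open_def by auto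
  next
    case False
    define U where "U = {u. {u<..} \<in> K}"
    have "\<Union>K = {Inf U<..}"
    proof (intro set_eqI iffI)
      fix x assume "x \<in> \<Union>K"
      then obtain S where "S \<in> K" "x \<in> S" by auto
      with K False obtain u where "S = {u<..}" unfolding upper_open_def by auto
      then have "u \<in> U" "u < x" using \<open>S \<in> K\<close> \<open>x \<in> S\<close> by (auto simp: U_def)
      then show "x \<in> {Inf U<..}" by (meson Inf_lower greaterThan_iff le_less_trans)
    next
      fix x assume "x \<in> {Inf U<..}"
      then obtain u where "u \<in> U" "u < x" by (auto simp: Inf_less_iff)
      then show "x \<in> \<Union>K" by (auto simp: U_def)
    qed
    then show ?thesis unfolding upper_open_def by auto
  qed
qed

definition upper_topology :: "ennreal topology" where
  "upper_topology = topology upper_open"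

lemma openin_upper_topology: "openin upper_topology S \<longleftrightarrow> upper_open S"
  unfolding upper_topology_def using istopology_upper_open by simp

end

theory Submission
  imports Defs
begin

lemma usc_iff:
  "continuous_map X upper_topology f \<longleftrightarrow> (\<forall>c. openin X {x\<in>topspace X. c < f x})"
proof -
  have tu: "topspace upper_topology = UNIV"
    by (metis openin_upper_topology upper_open_def UNIV_I openin_subset subset_antisym subsetI)
  have "(\<forall>U. openin upper_topology U \<longrightarrow> openin X {x \<in> topspace X. f x \<in> U})
     \<longleftrightarrow> (\<forall>c. openin X {x\<in>topspace X. c < f x})"
  proof (intro iffI allI impI)
    fix c assume "\<forall>U. openin upper_topology U \<longrightarrow> openin X {x \<in> topspace X. f x \<in> U}"
    then have "openin X {x \<in> topspace X. f x \<in> {c<..}}"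
      by (metis openin_upper_topology upper_open_def)
    then show "openin X {x\<in>topspace X. c < f x}" by simp
  next
    fix U assume H: "\<forall>c. openin X {x\<in>topspace X. c < f x}" "openin upper_topology U"
    then consider "U = UNIV" | u where "U = {u<..}" by (auto simp: openin_upper_topology upper_open_def)
    then show "openin X {x \<in> topspace X. f x \<in> U}"
    proof cases
      case 1 then show ?thesis by simp
    next
      case 2 then show ?thesis using H(1) by simp
    qed
  qed
  then show ?thesis
    unfolding continuous_map_def tu by simp
qed

lemma dens:
  fixes c p q :: ennreal
  assumes "c < p + q" "\<not> c < p" "\<not> c < q"
  shows "\<exists>a b. a < p \<and> b < q \<and> c \<le> a + b"
proof -
  have ct: "c < top" by (rule less_le_trans[OF assms(1) top_greatest])
  obtain c' where c: "c = ennreal c'" "c' \<ge> 0" using ct by (cases c) auto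
  obtain p' where p: "p = ennreal p'" "p' \<ge> 0" using assms(2) ct
    by (cases p) (auto simp: not_less)
  obtain q' where q: "q = ennreal q'" "q' \<ge> 0" using assms(3) ct
    by (cases q) (auto simp: not_less)
  have h: "c' < p' + q'" "p' \<le> c'" "q' \<le> c'" using assms c p q
    by (auto simp: ennreal_plus[symmetric] ennreal_less_iff simp del: ennreal_plus)
  define d where "d = p' + q' - c'"
  have d: "0 < d" "d \<le> p'" "d \<le> q'" using h by (auto simp: d_def)
  have "ennreal (p' - d/2) < p" using d p by (simp add: ennreal_less_iff)
  moreover have "ennreal (q' - d/2) < q" using d q by (simp add: ennreal_less_iff)
  moreover have "c \<le> ennreal (p' - d/2) + ennreal (q' - d/2)"
    using d c by (simp add: ennreal_plus[symmetric] d_def del: ennreal_plus)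
  ultimately show ?thesis by blast
qed
lemma lsc_closed:
  assumes "continuous_map X upper_topology f"
  shows "closedin X {x\<in>topspace X. f x \<le> c}"
proof -
  have "topspace X - {x\<in>topspace X. f x \<le> c} = {x\<in>topspace X. c < f x}" by auto
  then show ?thesis using assms unfolding usc_iff closedin_def by auto
qed

lemma lsc_add:
  assumes f: "continuous_map X upper_topology f" and g: "continuous_map X upper_topology g"
  shows "continuous_map X upper_topology (\<lambda>x. f x + g x)"
  unfolding usc_iff
proof
  fix c
  show "openin X {x \<in> topspace X. c < f x + g x}"
  proof (subst openin_subopen, intro ballI)
    fix x assume x: "x \<in> {x \<in> topspace X. c < f x + g x}"
    show "\<exists>T. openin X T \<and> x \<in> T \<and> T \<subseteq> {x \<in> topspace X. c < f x + g x}"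
    proof (cases "c < f x")
      case True
      then show ?thesis using x f unfolding usc_iff
        by (intro exI[of _ "{x \<in> topspace X. c < f x}"])
           (auto intro: less_le_trans[OF _ add_increasing2[OF zero_le]])
    next
      case nf: False
      show ?thesis
      proof (cases "c < g x")
        case True
        then show ?thesis using x g unfolding usc_iff
          by (intro exI[of _ "{x \<in> topspace X. c < g x}"])
             (auto intro: less_le_trans[OF _ add_increasing[OF zero_le]])
      next
        case False
        then obtain a b where ab: "a < f x" "b < g x" "c \<le> a + b"
          using dens[of c "f x" "g x"] x nf by auto
        show ?thesis
          apply (intro exI[of _ "{x \<in> topspace X. a < f x} \<inter> {x \<in> topspace X. b < g x}"])
          using f g ab x unfolding usc_iff
          by (auto intro: le_less_trans[OF _ add_strict_mono])
      qed
    qed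
  qed
qed

lemma lsc_attains:
  assumes X: "compact_space X" and f: "continuous_map X upper_topology f"
    and K: "closedin X K" "K \<noteq> {}"
  shows "\<exists>z\<in>K. \<forall>w\<in>K. f z \<le> f w"
proof (cases "\<exists>z\<in>K. f z \<le> Inf (f ` K)")
  case True
  then show ?thesis by (meson INF_lower order_trans)
next
  case False
  define m where "m = Inf (f ` K)"
  have mt: "m < top"
  proof (rule ccontr)
    assume "\<not> m < top"
    then have "m = top" using top.not_eq_extremum by blast
    then show False using False K(2) m_def by auto
  qed
  define U where "U = (\<lambda>u. {x\<in>K. f x \<le> u}) ` {m<..}"
  have cl: "\<forall>C\<in>U. closedin X C"
  proof
    fix C assume "C \<in> U"
    then obtain u where "C = {x\<in>K. f x \<le> u}" unfolding U_def by auto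
    moreover have "{x\<in>K. f x \<le> u} = K \<inter> {x\<in>topspace X. f x \<le> u}"
      using closedin_subset[OF K(1)] by auto
    ultimately show "closedin X C" using K(1) lsc_closed[OF f] by auto
  qed
  have fip: "\<forall>F. finite F \<and> F \<subseteq> U \<longrightarrow> \<Inter>F \<noteq> {}"
  proof (intro allI impI)
    fix F assume F: "finite F \<and> F \<subseteq> U"
    then obtain N where N: "N \<subseteq> {m<..}" "finite N" "F = (\<lambda>u. {x\<in>K. f x \<le> u}) ` N"
      unfolding U_def by (meson finite_subset_image)
    show "\<Inter>F \<noteq> {}"
    proof (cases "N = {}")
      case True then show ?thesis using N by auto
    next
      case Ne: False
      have "m < Min N" using N Ne by auto
      then obtain w where w: "w \<in> K" "f w < Min N" unfolding m_def by (auto simp: Inf_less_iff)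
      have "w \<in> \<Inter>F" using N Ne w by auto
      then show ?thesis by auto
    qed
  qed
  have "\<Inter>U \<noteq> {}" using X cl fip unfolding compact_space_fip by blast
  then obtain z where z: "z \<in> \<Inter>U" by auto
  have "U \<noteq> {}" using mt unfolding U_def by auto
  then have zK: "z \<in> K" using z unfolding U_def by auto
  have "\<And>u. m < u \<Longrightarrow> f z \<le> u" using z unfolding U_def by auto
  then have "f z \<le> m" by (meson dense_ge)
  then show ?thesis using False zK m_def by auto
qed
lemma key:
  fixes X :: "'a topology" and \<rho> :: "'a \<Rightarrow> 'a \<Rightarrow> ennreal"
  assumes X: "compact_space X"
    and c: "continuous_map (prod_topology X X) upper_topology (\<lambda>(x, y). \<rho> x y)"
    and tr: "\<And>x y. x \<in> topspace X \<Longrightarrow> y \<in> topspace X \<Longrightarrow>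
           \<rho> x y = (INF z\<in>topspace X. \<rho> x z + \<rho> z y)"
    and x: "x \<in> topspace X" and y: "y \<in> topspace X" and r: "\<rho> x y < top"
  shows "\<exists>a\<in>topspace X. \<rho> a a = 0 \<and> \<rho> x a + \<rho> a y \<le> \<rho> x y"
proof -
  define T where "T = topspace X"
  have tri: "\<rho> a c \<le> \<rho> a b + \<rho> b c" if "a \<in> T" "b \<in> T" "c \<in> T" for a b c
  proof -
    have "(INF z\<in>topspace X. \<rho> a z + \<rho> z c) \<le> \<rho> a b + \<rho> b c"
      by (rule INF_lower) (use that in \<open>simp add: T_def\<close>)
    then show ?thesis using tr[of a c] that unfolding T_def by simp
  qed
  have secL: "continuous_map X upper_topology (\<lambda>w. \<rho> w z)" if "z \<in> T" for z
  proof -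
    have "continuous_map X (prod_topology X X) (\<lambda>w. (w, z))"
      using that unfolding T_def by (simp add: continuous_map_paired)
    from continuous_map_compose[OF this c] show ?thesis by (simp add: o_def)
  qed
  have secR: "continuous_map X upper_topology (\<lambda>w. \<rho> z w)" if "z \<in> T" for z
  proof -
    have "continuous_map X (prod_topology X X) (\<lambda>w. (z, w))"
      using that unfolding T_def by (simp add: continuous_map_paired)
    from continuous_map_compose[OF this c] show ?thesis by (simp add: o_def)
  qed
  define r where "r = \<rho> x y"
  define M where "M = {z\<in>T. \<rho> x z + \<rho> z y \<le> r}"
  have Mcl: "closedin X M" unfolding M_def T_def
    using lsc_closed[OF lsc_add[OF secR[OF x[folded T_def]] secL[OF y[folded T_def]]]] .
  obtain z0 where z0: "z0 \<in> T" "\<forall>w\<in>T. \<rho> x z0 + \<rho> z0 y \<le> \<rho> x w + \<rho> w y"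
    using lsc_attains[OF X lsc_add[OF secR[OF x[folded T_def]] secL[OF y[folded T_def]]]
       closedin_topspace] x unfolding T_def by blast
  have "\<rho> x z0 + \<rho> z0 y \<le> r" unfolding r_def tr[OF x y] using z0 unfolding T_def
    by (simp add: le_INF_iff)
  then have "z0 \<in> M" using z0 unfolding M_def by auto
  then obtain z1 where z1: "z1 \<in> M" "\<forall>w\<in>M. \<rho> x z1 \<le> \<rho> x w"
    using lsc_attains[OF X secR[OF x[folded T_def]] Mcl] by blast
  define m where "m = \<rho> x z1"
  define M0 where "M0 = {z\<in>M. \<rho> x z = m}"
  have "m \<le> r" using z1 unfolding M_def m_def by (auto intro: order_trans[OF add_increasing2[OF zero_le]])
  then have mt: "m < top" using r r_def by auto
  have pred: "\<exists>w\<in>M0. \<rho> w z = 0" if zM: "z \<in> M0" for z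
  proof -
    have zT: "z \<in> T" using zM unfolding M0_def M_def by auto
    obtain w where w: "w \<in> T" "\<forall>v\<in>T. \<rho> x w + \<rho> w z \<le> \<rho> x v + \<rho> v z"
      using lsc_attains[OF X lsc_add[OF secR[OF x[folded T_def]] secL[OF zT]]
         closedin_topspace] x unfolding T_def by blast
    have eq: "\<rho> x w + \<rho> w z = \<rho> x z"
    proof (rule antisym)
      show "\<rho> x w + \<rho> w z \<le> \<rho> x z" unfolding tr[OF x zT[unfolded T_def]]
        using w unfolding T_def by (simp add: le_INF_iff)
      show "\<rho> x z \<le> \<rho> x w + \<rho> w z" using tri x w zT unfolding T_def by auto
    qed
    have "\<rho> x w + \<rho> w y \<le> \<rho> x w + (\<rho> w z + \<rho> z y)"
      using tri[OF w(1) zT y[folded T_def]] by (simp add: add_left_mono)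
    also have "\<dots> = \<rho> x z + \<rho> z y" using eq by (simp add: add.assoc)
    also have "\<dots> \<le> r" using zM unfolding M0_def M_def by auto
    finally have wM: "w \<in> M" using w unfolding M_def by auto
    then have "m \<le> \<rho> x w" using z1 unfolding m_def by auto
    moreover have "\<rho> x w \<le> \<rho> x w + \<rho> w z" by (rule add_increasing2) simp_all
    then have "\<rho> x w \<le> m" using eq zM unfolding M0_def by simp
    ultimately have xw: "\<rho> x w = m" by auto
    then have "m + \<rho> w z = m + 0" using eq zM unfolding M0_def by auto
    moreover have "m \<noteq> \<infinity>" using mt by auto
    ultimately have "\<rho> w z = 0" unfolding ennreal_add_left_cancel by blast
    then show ?thesis using wM xw unfolding M0_def by auto
  qed
  then obtain P where P: "\<And>z. z \<in> M0 \<Longrightarrow> P z \<in> M0 \<and> \<rho> (P z) z = 0" by metis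
  define zs where "zs n = (P ^^ n) z1" for n
  have z1M0: "z1 \<in> M0" using z1 unfolding M0_def m_def by auto
  have zin: "zs n \<in> M0" for n
    by (induction n) (auto simp: zs_def z1M0 P)
  have zT: "zs n \<in> T" for n using zin[of n] unfolding M0_def M_def by auto
  have zz: "n < k \<Longrightarrow> \<rho> (zs k) (zs n) = 0" for n k
  proof (induction k)
    case 0 then show ?case by simp
  next
    case (Suc k)
    have s: "zs (Suc k) = P (zs k)" by (simp add: zs_def)
    show ?case
    proof (cases "n = k")
      case True then show ?thesis using s P zin by auto
    next
      case False
      then have "\<rho> (zs k) (zs n) = 0" using Suc by auto
      moreover have "\<rho> (zs (Suc k)) (zs k) = 0" using s P zin by auto
      ultimately show ?thesis using tri[OF zT[of "Suc k"] zT[of k] zT[of n]] by simp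
    qed
  qed
  define C where "C n = X closure_of (zs ` {n<..})" for n
  have "\<Inter>(range C) \<noteq> {}"
    unfolding compact_space_fip[symmetric] using X
  proof -
    have "\<forall>F. finite F \<and> F \<subseteq> range C \<longrightarrow> \<Inter>F \<noteq> {}"
    proof (intro allI impI)
      fix F assume F: "finite F \<and> F \<subseteq> range C"
      then obtain N where N: "finite N" "F = C ` N" by (meson finite_subset_image subset_UNIV)
      define k where "k = Suc (Max (insert 0 N))"
      have "zs k \<in> C n" if "n \<in> N" for n
      proof -
        have "n < k" using N that unfolding k_def by (simp add: le_imp_less_Suc)
        then have "zs k \<in> zs ` {n<..}" by auto
        moreover have "zs ` {n<..} \<subseteq> topspace X" using zT unfolding T_def by auto
        ultimately show ?thesis unfolding C_def using closure_of_subset by blast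
      qed
      then show "\<Inter>F \<noteq> {}" using N by auto
    qed
    moreover have "\<forall>D\<in>range C. closedin X D" unfolding C_def by auto
    ultimately show ?thesis using X unfolding compact_space_fip by blast
  qed
  then obtain a where a: "\<And>n. a \<in> C n" by auto
  have aT: "a \<in> T" using a[of 0] closure_of_subset_topspace[of X] unfolding C_def T_def by (meson subsetD)
  have az: "\<rho> a (zs n) = 0" for n
  proof -
    have "zs ` {n<..} \<subseteq> {w\<in>topspace X. \<rho> w (zs n) \<le> 0}" using zz zT unfolding T_def by auto
    then have "C n \<subseteq> {w\<in>topspace X. \<rho> w (zs n) \<le> 0}"
      unfolding C_def by (rule closure_of_minimal[OF _ lsc_closed[OF secL[OF zT]]])
    then show ?thesis using a[of n] by auto
  qed
  have "zs ` {0<..} \<subseteq> {w\<in>topspace X. \<rho> a w \<le> 0} \<inter> M"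
    using az zT zin unfolding T_def M0_def by auto
  then have "C 0 \<subseteq> {w\<in>topspace X. \<rho> a w \<le> 0} \<inter> M"
    unfolding C_def by (rule closure_of_minimal[OF _ closedin_Int[OF lsc_closed[OF secR[OF aT]] Mcl]])
  then have "\<rho> a a = 0" "a \<in> M" using a[of 0] by auto
  then show ?thesis unfolding M_def r_def T_def by auto
qed

theorem lemma5p13:
  fixes X :: "'a topology" and \<rho> :: "'a \<Rightarrow> 'a \<Rightarrow> ennreal"
  assumes "compact_space X" and "Hausdorff_space X"
    and "continuous_map (prod_topology X X) upper_topology (\<lambda>(x, y). \<rho> x y)"
    and "\<And>x y. x \<in> topspace X \<Longrightarrow> y \<in> topspace X \<Longrightarrow>
           \<rho> x y = (INF z\<in>topspace X. \<rho> x z + \<rho> z y)"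
  shows "\<forall>x\<in>topspace X. \<forall>y\<in>topspace X.
           \<rho> x y = (INF a\<in>{a\<in>topspace X. \<rho> a a = 0}. \<rho> x a + \<rho> a y)"
proof (intro ballI antisym)
  fix x y assume x: "x \<in> topspace X" and y: "y \<in> topspace X"
  show "\<rho> x y \<le> (INF a\<in>{a\<in>topspace X. \<rho> a a = 0}. \<rho> x a + \<rho> a y)"
    using assms(4)[OF x y] by (auto intro!: INF_greatest INF_lower)
  show "(INF a\<in>{a\<in>topspace X. \<rho> a a = 0}. \<rho> x a + \<rho> a y) \<le> \<rho> x y"
  proof (cases "\<rho> x y < top")
    case True
    then obtain a where "a \<in> topspace X" "\<rho> a a = 0" "\<rho> x a + \<rho> a y \<le> \<rho> x y"
      using key[OF assms(1) assms(3) assms(4) x y] by blast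
    then show ?thesis by (auto intro: INF_lower2)
  next
    case False
    then have "\<rho> x y = top" using top.not_eq_extremum by blast
    then show ?thesis by simp
  qed
qed
end
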